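(* Let $\Omega\subset\mathbf{R}^2$ be a convex bounded domain whose boundary $\gamma$ is a smooth simple closed curve with curvature $k$ satisfying $0<\beta<\min_\gamma k$, and let $r=1/\beta$. Let $F$ be a nonzero real polynomial vanishing on $\gamma_{+r}\cup\gamma_{-r}$ and satisfying, for every $s$ and every $\epsilon$ in a neighborhood of $0$, $$F\big(\gamma(s)+rR_{-\epsilon}J\dot\gamma(s)\big)=F\big(\gamma(s)-rR_{\epsilon}J\dot\gamma(s)\big).$$ Let $f_\pm$ be the minimal defining polynomials of the irreducible components in $\mathbf{C}^2$ containing $\gamma_{\pm r}$, and suppose $f_+\neq f_-$ (the two curves lie on different components). Write $F=f_+^k f_-^l g_1$ where $g_1$ vanishes on $\gamma_{\pm r}$ at only finitely many points. Then $k=l$.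
   Context: $\gamma(s)$ is the arc-length parametrization of $\gamma$ in counterclockwise direction, $J$ is counterclockwise rotation by $\pi/2$, $R_\epsilon$ is counterclockwise rotation by angle $\epsilon$. The parallel curves are $\gamma_{\pm r}(s)=\gamma(s)\pm rJ\dot\gamma(s)$; under the hypotheses they are real algebraic curves. The displayed identity expresses that $F$ takes equal values at the center of a positive Larmor circle of radius $r$ hitting $\gamma$ at $\gamma(s)$ at angle $\epsilon$ and at the center of the reflected negative Larmor circle in the two-sided magnetic billiard (the magnetic field changes sign after each reflection). *)

theory Defs
  imports "HOL-Complex_Analysis.Complex_Analysis" "HOL-Computational_Algebra.Polynomial_Factorial"
begin

text \<open>The plane R^2 is identified with the complex numbers; J is multiplication by i,
  R_eps is multiplication by exp(i eps).  Bivariate polynomials are 'a poly poly: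
  the inner variable is x, the outer one is y.\<close>

definition eval2 :: "'a::comm_semiring_1 poly poly \<Rightarrow> 'a \<Rightarrow> 'a \<Rightarrow> 'a" where
  "eval2 P x y = poly (map_poly (\<lambda>c. poly c x) P) y"

definition evalR :: "real poly poly \<Rightarrow> complex \<Rightarrow> real" where
  "evalR P z = eval2 P (Re z) (Im z)"

definition evalC :: "complex poly poly \<Rightarrow> complex \<Rightarrow> complex" where
  "evalC P z = eval2 P (complex_of_real (Re z)) (complex_of_real (Im z))"

definition complexify :: "real poly poly \<Rightarrow> complex poly poly" where
  "complexify P = map_poly (map_poly complex_of_real) P"

definition vderiv :: "(real \<Rightarrow> complex) \<Rightarrow> real \<Rightarrow> complex" where
  "vderiv g t = vector_derivative g (at t)"

definition smooth_curve :: "(real \<Rightarrow> complex) \<Rightarrow> bool" where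
  "smooth_curve g \<longleftrightarrow> (\<forall>n t. (vderiv ^^ n) g differentiable at t)"

text \<open>Signed curvature of a unit-speed curve.\<close>
definition curvature :: "(real \<Rightarrow> complex) \<Rightarrow> real \<Rightarrow> real" where
  "curvature g s = Im (cnj (vderiv g s) * vderiv (vderiv g) s)"

definition parallel_curve :: "(real \<Rightarrow> complex) \<Rightarrow> real \<Rightarrow> real \<Rightarrow> complex" where
  "parallel_curve g d s = g s + complex_of_real d * \<i> * vderiv g s"

end

theory Submission
  imports Defs "HOL-Computational_Algebra.Field_as_Ring"
begin

lemma eval2_0[simp]: "eval2 0 x y = 0" by (simp add: eval2_def)

lemma eval2_pCons[simp]: "eval2 (pCons c P) x y = poly c x + y * eval2 P x y"
  by (simp add: eval2_def map_poly_pCons)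

lemma eval2_const[simp]: "eval2 [:c:] x y = poly c x"
  by simp

lemma eval2_add[simp]: "eval2 (P + Q) x y = eval2 P x y + eval2 Q x y"
proof (induction P arbitrary: Q)
  case (pCons a P)
  then show ?case by (cases Q) (auto simp: algebra_simps)
qed simp

lemma eval2_smult[simp]: "eval2 (smult a P) x y = poly a x * eval2 P x y"
  by (induction P) (auto simp: algebra_simps)

lemma eval2_mult[simp]: "eval2 (P * Q) x y = eval2 P x y * eval2 Q x y"
  by (induction P) (auto simp: algebra_simps)

lemma eval2_1[simp]: "eval2 1 x y = 1"
  by (simp add: one_pCons)

lemma eval2_power[simp]: "eval2 (P ^ n) x y = eval2 P x y ^ n"
  by (induction n) auto

lemma eval2_uminus[simp]: "eval2 (- P) x y = - eval2 (P::'a::comm_ring_1 poly poly) x y"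
  by (induction P) auto

lemma eval2_diff[simp]: "eval2 (P - Q) x y = eval2 P x y - eval2 (Q::'a::comm_ring_1 poly poly) x y"
  using eval2_add[of P "-Q"] by simp

lemma evalC_mult[simp]: "evalC (P * Q) z = evalC P z * evalC Q z"
  by (simp add: evalC_def)
lemma evalC_power[simp]: "evalC (P ^ n) z = evalC P z ^ n"
  by (simp add: evalC_def)

lemma poly_map_of_real: "poly (map_poly of_real p) (of_real x) = (of_real (poly p x) :: complex)"
  by (induction p) (auto simp: map_poly_pCons)

lemma eval2_complexify: "eval2 (complexify F) (complex_of_real x) (complex_of_real y) = complex_of_real (eval2 F x y)"
  unfolding complexify_def
  by (induction F) (auto simp: map_poly_pCons poly_map_of_real)

lemma evalC_complexify: "evalC (complexify F) z = complex_of_real (evalR F z)"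
  by (simp add: evalC_def evalR_def eval2_complexify)

lemma clear_denom:
  fixes X :: "'a::{idom_divide,ring_gcd,factorial_semiring,semiring_Gcd,semiring_gcd_mult_normalize} fract poly"
  shows "\<exists>d X'. d \<noteq> 0 \<and> smult (to_fract d) X = fract_poly X'"
proof (induction X)
  case 0
  show ?case by (intro exI[of _ 1] exI[of _ 0]) simp
next
  case (pCons c X)
  then obtain d0 X0 where d0: "d0 \<noteq> 0" "smult (to_fract d0) X = fract_poly X0" by blast
  obtain a b where ab: "c = Fract a b" "b \<noteq> 0" by (cases c rule: Fract_cases)
  have e1: "smult (to_fract (b*d0)) X = smult (to_fract b) (fract_poly X0)"
    using d0 by (simp flip: smult_smult)
  have "smult (to_fract (b * d0)) (pCons c X) = pCons (to_fract (d0 * a)) (smult (to_fract b) (fract_poly X0))"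
    using ab d0 e1 by (simp add: Fract_conv_to_fract field_simps)
  also have "\<dots> = fract_poly (pCons (d0 * a) (smult b X0))"
    by (simp add: map_poly_pCons)
  finally show ?case using ab d0 by (intro exI[of _ "b*d0"] exI) auto
qed

lemma field_bezout:
  fixes P Q :: "'a::field poly"
  assumes irr: "irreducible P" and nd: "\<not> P dvd Q"
  shows "\<exists>A B. A * P + B * Q = 1"
proof -
  define S where "S = {D. D \<noteq> 0 \<and> (\<exists>A B. D = A * P + B * Q)}"
  have "P \<noteq> 0" using irr by (simp add: irreducible_def)
  moreover have "P = 1 * P + 0 * Q" by simp
  ultimately have PS: "P \<in> S" unfolding S_def by blast
  define n where "n = (LEAST n. \<exists>D\<in>S. degree D = n)"
  have ex: "\<exists>n. \<exists>D\<in>S. degree D = n" using PS by blast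
  have "\<exists>D\<in>S. degree D = n" unfolding n_def by (rule LeastI_ex[OF ex])
  then obtain D A0 B0 where D: "D \<noteq> 0" "D = A0 * P + B0 * Q" "degree D = n" unfolding S_def by auto
  have minim: "degree D \<le> degree E" if "E \<in> S" for E
    unfolding n_def D(3) using that by (auto intro: Least_le)
  have dv: "D dvd X" if "X = A1 * P + B1 * Q" for X A1 B1
  proof (rule ccontr)
    assume "\<not> D dvd X"
    then have nz: "X mod D \<noteq> 0" by (simp add: dvd_eq_mod_eq_0)
    have "X mod D = X - (X div D) * D" by (simp add: minus_div_mult_eq_mod)
    also have "\<dots> = (A1 - (X div D) * A0) * P + (B1 - (X div D) * B0) * Q"
      using that D(2) by (simp add: algebra_simps)
    finally have "X mod D \<in> S" using nz unfolding S_def by blast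
    then have "degree D \<le> degree (X mod D)" by (rule minim)
    moreover have "degree (X mod D) < degree D" using degree_mod_less[OF D(1), of X] nz by blast
    ultimately show False by simp
  qed
  have dP: "D dvd P" by (rule dv[of P 1 0]) simp
  have dQ: "D dvd Q" by (rule dv[of Q 0 1]) simp
  from dP obtain E where E: "P = D * E" by (auto elim: dvdE)
  from irreducibleD[OF irr E] have "is_unit D \<or> is_unit E" .
  moreover have "\<not> is_unit E"
  proof
    assume "is_unit E"
    then have "P dvd D" using E by (metis dvd_mult_unit_iff dvd_refl)
    with dQ nd show False using dvd_trans by blast
  qed
  ultimately have "is_unit D" by blast
  then obtain U where U: "1 = D * U" by (auto elim: dvdE)
  show ?thesis using U D(2) by (intro exI[of _ "U * A0"] exI[of _ "U * B0"]) (simp add: algebra_simps)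
qed

lemma poly_bezout:
  fixes p q :: "complex poly poly"
  assumes irr: "irreducible p" and deg: "degree p > 0" and ndvd: "\<not> p dvd q"
  shows "\<exists>A B R. R \<noteq> 0 \<and> A * p + B * q = [:R:]"
proof -
  from deg irr have irrf: "irreducible (fract_poly p)" and cont: "content p = 1"
    using nonconst_poly_irreducible_iff[of p] by auto
  have nd: "\<not> fract_poly p dvd fract_poly q"
    using fract_poly_dvdD[OF _ cont] ndvd by blast
  obtain A B where AB: "A * fract_poly p + B * fract_poly q = 1"
    using field_bezout[OF irrf nd] by blast
  obtain dA A' where A': "dA \<noteq> 0" "smult (to_fract dA) A = fract_poly A'" using clear_denom by blast
  obtain dB B' where B': "dB \<noteq> 0" "smult (to_fract dB) B = fract_poly B'" using clear_denom by blast
  have "smult (to_fract (dA * dB)) (A * fract_poly p + B * fract_poly q) = [:to_fract (dA*dB):]"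
    using AB by simp
  moreover have "smult (to_fract (dA * dB)) (A * fract_poly p + B * fract_poly q)
     = smult (to_fract dB) (smult (to_fract dA) A) * fract_poly p + smult (to_fract dA) (smult (to_fract dB) B) * fract_poly q"
    by (simp add: smult_add_right mult.commute)
  moreover have "smult (to_fract dB) (smult (to_fract dA) A) * fract_poly p + smult (to_fract dA) (smult (to_fract dB) B) * fract_poly q
     = fract_poly (smult dB A' * p + smult dA B' * q)"
    using A' B' by simp
  moreover have "fract_poly [:dA * dB:] = [:to_fract (dA * dB):]" by (simp add: map_poly_pCons)
  ultimately have "fract_poly (smult dB A' * p + smult dA B' * q) = fract_poly [:dA * dB:]"
    by metis
  then have "smult dB A' * p + smult dA B' * q = [:dA * dB:]" using fract_poly_eq_iff by blast
  then show ?thesis using A' B' by (intro exI[of _ "smult dB A'"] exI[of _ "smult dA B'"] exI[of _ "dA*dB"]) auto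
qed


lemma bezout_finite:
  fixes p q :: "complex poly poly"
  assumes irr: "irreducible p" and deg: "degree p > 0" and ndvd: "\<not> p dvd q"
  shows "finite {z. evalC p z = 0 \<and> evalC q z = 0}"
proof -
  obtain A B R where R: "R \<noteq> 0" "A * p + B * q = [:R:]" using poly_bezout[OF assms] by blast
  from deg irr have cont: "content p = 1"
    using nonconst_poly_irreducible_iff[of p] by auto
  have nz: "map_poly (\<lambda>c. poly c x0) p \<noteq> 0" for x0
  proof
    assume h: "map_poly (\<lambda>c. poly c x0) p = 0"
    have "poly (coeff p i) x0 = 0" for i
      using arg_cong[OF h, of "\<lambda>P. coeff P i"] by (simp add: coeff_map_poly)
    then have "[:-x0,1:] dvd coeff p i" for i by (simp add: poly_eq_0_iff_dvd)
    then have "[:[:-x0,1:]:] dvd p" by (simp add: const_poly_dvd_iff)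
    then have "[:-x0,1:] dvd content p" by (simp add: const_poly_dvd_iff_dvd_content)
    then have "is_unit [:-x0,1:]" using cont by simp
    then have "degree [:-x0,1:] = 0" by (simp add: is_unit_iff_degree)
    then show False by simp
  qed
  define X where "X = {x. poly R x = 0}"
  have fX: "finite X" unfolding X_def using R(1) by (rule poly_roots_finite)
  define Sg where "Sg = Sigma X (\<lambda>x0. {y. poly (map_poly (\<lambda>c. poly c x0) p) y = 0})"
  have fS: "finite Sg" unfolding Sg_def using fX nz by (intro finite_SigmaI poly_roots_finite) auto
  define g where "g = (\<lambda>z::complex. (complex_of_real (Re z), complex_of_real (Im z)))"
  have ig: "inj g" unfolding g_def inj_def by (auto simp: complex_eq_iff)
  have "{z. evalC p z = 0 \<and> evalC q z = 0} \<subseteq> g -` Sg"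
  proof (rule subsetI)
    fix z assume "z \<in> {z. evalC p z = 0 \<and> evalC q z = 0}"
    then have h: "evalC p z = 0" "evalC q z = 0" by auto
    have "eval2 (A * p + B * q) (complex_of_real (Re z)) (complex_of_real (Im z)) = 0"
      using h by (simp add: evalC_def)
    then have "poly R (complex_of_real (Re z)) = 0" using R(2) by simp
    moreover have "poly (map_poly (\<lambda>c. poly c (complex_of_real (Re z))) p) (complex_of_real (Im z)) = 0"
      using h by (simp add: evalC_def eval2_def)
    ultimately show "z \<in> g -` Sg" unfolding g_def Sg_def X_def by simp
  qed
  moreover have "finite (g -` Sg)" using fS ig by (simp add: finite_vimageI)
  ultimately show ?thesis by (rule finite_subset)
qed

definition fX :: "complex poly poly \<Rightarrow> complex poly poly" where "fX f = map_poly pderiv f"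
definition fY :: "complex poly poly \<Rightarrow> complex poly poly" where "fY f = pderiv f"
definition grad :: "complex poly poly \<Rightarrow> complex \<Rightarrow> complex \<Rightarrow> complex" where
  "grad f z v = evalC (fX f) z * complex_of_real (Re v) + evalC (fY f) z * complex_of_real (Im v)"

lemma eval2_deriv:
  fixes f :: "complex poly poly" and X Y :: "real \<Rightarrow> complex"
  assumes dX: "(X has_vector_derivative X') (at t within S)"
    and dY: "(Y has_vector_derivative Y') (at t within S)"
  shows "((\<lambda>t. eval2 f (X t) (Y t)) has_vector_derivative
     (eval2 (map_poly pderiv f) (X t) (Y t) * X' + eval2 (pderiv f) (X t) (Y t) * Y')) (at t within S)"
proof (induction f)
  case 0
  then show ?case by simp
next
  case (pCons c f)
  have d1: "((\<lambda>t. poly c (X t)) has_vector_derivative X' * poly (pderiv c) (X t)) (at t within S)"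
    using field_vector_diff_chain_within[OF dX, of "poly c" "poly (pderiv c) (X t)"]
    by (simp add: o_def has_field_derivative_at_within)
  have d2: "((\<lambda>t. Y t * eval2 f (X t) (Y t)) has_vector_derivative
     (Y t * (eval2 (map_poly pderiv f) (X t) (Y t) * X' + eval2 (pderiv f) (X t) (Y t) * Y') + Y' * eval2 f (X t) (Y t))) (at t within S)"
    by (rule has_vector_derivative_mult[OF dY pCons.IH])
  have "((\<lambda>t. eval2 (pCons c f) (X t) (Y t)) has_vector_derivative
     (X' * poly (pderiv c) (X t) + (Y t * (eval2 (map_poly pderiv f) (X t) (Y t) * X' + eval2 (pderiv f) (X t) (Y t) * Y') + Y' * eval2 f (X t) (Y t)))) (at t within S)"
    using has_vector_derivative_add[OF d1 d2] by simp
  then show ?case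
    by (simp add: map_poly_pCons pderiv_pCons algebra_simps)
qed

lemma evalC_deriv:
  assumes "(P has_vector_derivative P') (at t within S)"
  shows "((\<lambda>t. evalC f (P t)) has_vector_derivative grad f (P t) P') (at t within S)"
proof -
  have dX: "((\<lambda>t. complex_of_real (Re (P t))) has_vector_derivative complex_of_real (Re P')) (at t within S)"
    using assms by (intro has_vector_derivative_of_real) (simp add: has_vector_derivative_complex_iff)
  have dY: "((\<lambda>t. complex_of_real (Im (P t))) has_vector_derivative complex_of_real (Im P')) (at t within S)"
    using assms by (intro has_vector_derivative_of_real) (simp add: has_vector_derivative_complex_iff)
  show ?thesis using eval2_deriv[OF dX dY, of f]
    by (simp add: evalC_def grad_def fX_def fY_def)
qed

lemma grad_linear:
  "grad f z (complex_of_real a * v + complex_of_real b * w) = complex_of_real a * grad f z v + complex_of_real b * grad f z w"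
  by (simp add: grad_def algebra_simps)

locale ucurve =
  fixes g :: "real \<Rightarrow> complex"
  assumes smooth: "smooth_curve g" and unit: "\<And>s. norm (vderiv g s) = 1"
begin

abbreviation "d1 \<equiv> vderiv g"
abbreviation "d2 \<equiv> vderiv d1"
abbreviation "d3 \<equiv> vderiv d2"
abbreviation "k \<equiv> curvature g"

lemma D0: "(g has_vector_derivative d1 t) (at t)"
proof -
  have "((vderiv ^^ 0) g) differentiable at t" using smooth unfolding smooth_curve_def by blast
  then show ?thesis by (simp add: vector_derivative_works vderiv_def)
qed

lemma D1: "(d1 has_vector_derivative d2 t) (at t)"
proof -
  have "((vderiv ^^ 1) g) differentiable at t" using smooth unfolding smooth_curve_def by blast
  then show ?thesis by (simp add: vector_derivative_works vderiv_def)
qed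

lemma D2: "(d2 has_vector_derivative d3 t) (at t)"
proof -
  have "((vderiv ^^ 2) g) differentiable at t" using smooth unfolding smooth_curve_def by blast
  then show ?thesis by (simp add: vector_derivative_works vderiv_def numeral_2_eq_2)
qed

lemma cnj_d1: "cnj (d1 t) * d1 t = 1"
  using unit[of t] complex_norm_square[of "d1 t"] by (simp add: mult.commute)

lemma R1: "Re (cnj (d1 t) * d2 t) = 0"
proof -
  have "((\<lambda>t. Re (cnj (d1 t) * d1 t)) has_field_derivative Re (cnj (d1 t) * d2 t + cnj (d2 t) * d1 t)) (at t)"
    by (intro has_field_derivative_Re has_vector_derivative_mult has_vector_derivative_cnj D1)
  moreover have "(\<lambda>t. Re (cnj (d1 t) * d1 t)) = (\<lambda>t. 1)" using cnj_d1 by simp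
  ultimately have "((\<lambda>t. 1) has_field_derivative Re (cnj (d1 t) * d2 t + cnj (d2 t) * d1 t)) (at t)" by simp
  then have "Re (cnj (d1 t) * d2 t + cnj (d2 t) * d1 t) = 0"
    using DERIV_unique DERIV_const by blast
  then show ?thesis by simp
qed

lemma R2: "Re (cnj (d2 t) * d2 t + cnj (d1 t) * d3 t) = 0"
proof -
  have "((\<lambda>t. Re (cnj (d1 t) * d2 t)) has_field_derivative Re (cnj (d1 t) * d3 t + cnj (d2 t) * d2 t)) (at t)"
    by (intro has_field_derivative_Re has_vector_derivative_mult has_vector_derivative_cnj D1 D2)
  moreover have "(\<lambda>t. Re (cnj (d1 t) * d2 t)) = (\<lambda>t. 0)" using R1 by simp
  ultimately have "((\<lambda>t. 0) has_field_derivative Re (cnj (d1 t) * d3 t + cnj (d2 t) * d2 t)) (at t)" by simp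
  then have "Re (cnj (d1 t) * d3 t + cnj (d2 t) * d2 t) = 0"
    using DERIV_unique DERIV_const by blast
  then show ?thesis by (simp add: add.commute)
qed

lemma K1: "d2 t = \<i> * complex_of_real (k t) * d1 t"
proof -
  have "cnj (d1 t) * d2 t = \<i> * complex_of_real (k t)"
    using R1[of t] by (simp add: curvature_def complex_eq_iff)
  note e = this
  have "d2 t = (cnj (d1 t) * d1 t) * d2 t" using cnj_d1[of t] by simp
  also have "\<dots> = d1 t * (cnj (d1 t) * d2 t)" by (simp add: algebra_simps)
  also have "\<dots> = d1 t * (\<i> * complex_of_real (k t))" using e by simp
  finally show ?thesis by (simp add: algebra_simps)
qed

lemma K2: "Re (cnj (d1 t) * d3 t) = - ((k t)^2)"
proof -
  have "cnj (d2 t) * d2 t = complex_of_real ((k t)^2)"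
    using K1[of t] cnj_d1[of t] by (simp add: algebra_simps power2_eq_square)
  then show ?thesis using R2[of t] by simp
qed

lemma K3: "d3 t = d1 t * complex_of_real (- ((k t)^2)) + \<i> * d1 t * complex_of_real (Im (cnj (d1 t) * d3 t))"
proof -
  have "d3 t = d1 t * (cnj (d1 t) * d3 t)" using cnj_d1[of t] by (simp add: algebra_simps)
  also have "cnj (d1 t) * d3 t = complex_of_real (- ((k t)^2)) + \<i> * complex_of_real (Im (cnj (d1 t) * d3 t))"
    using K2[of t] by (simp add: complex_eq_iff)
  finally show ?thesis by (simp add: algebra_simps)
qed

lemma PC1: "(parallel_curve g d has_vector_derivative (d1 t + complex_of_real d * \<i> * d2 t)) (at t)"
  unfolding parallel_curve_def
  by (intro has_vector_derivative_add D0 has_vector_derivative_mult_right D1)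

lemma PC1': "d1 t + complex_of_real d * \<i> * d2 t = complex_of_real (1 - d * k t) * d1 t"
  using K1[of t] by (simp add: algebra_simps)

lemma PC2: "((\<lambda>t. d1 t + complex_of_real d * \<i> * d2 t) has_vector_derivative (d2 t + complex_of_real d * \<i> * d3 t)) (at t)"
  by (intro has_vector_derivative_add D1 has_vector_derivative_mult_right D2)

lemma PC2': "d2 t + complex_of_real d * \<i> * d3 t =
   complex_of_real (k t * (1 - d * k t)) * (\<i> * d1 t) + complex_of_real (- d * Im (cnj (d1 t) * d3 t)) * d1 t"
  apply (subst K3, subst K1)
  by (simp add: algebra_simps power2_eq_square)

end

lemma limit2_real:
  fixes u v :: "real \<Rightarrow> real"
  assumes u0: "u 0 = 0" and du: "\<And>e. DERIV u e :> v e" and u10: "v 0 = 0" and du1: "DERIV v 0 :> c"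
  shows "((\<lambda>e. u e / e^2) \<longlongrightarrow> c / 2) (at 0)"
proof (rule lhopital[where f' = v and g' = "\<lambda>e. 2 * e"])
  have "isCont u 0" using du by (rule DERIV_isCont)
  then show "(u \<longlongrightarrow> 0) (at 0)" using u0 by (simp add: isCont_def)
  show "((\<lambda>e. e^2) \<longlongrightarrow> 0) (at (0::real))" by (auto intro!: tendsto_eq_intros)
  show "\<forall>\<^sub>F x in at 0. x^2 \<noteq> (0::real)" by (auto simp: eventually_at_filter)
  show "\<forall>\<^sub>F x in at 0. 2 * x \<noteq> (0::real)" by (auto simp: eventually_at_filter)
  show "\<forall>\<^sub>F x in at 0. DERIV u x :> v x" using du by simp
  have d: "DERIV (\<lambda>e::real. e^2) x :> 2 * x" for x using DERIV_pow[of 2 x] by simp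
  show "\<forall>\<^sub>F x in at 0. DERIV (\<lambda>e::real. e^2) x :> 2 * x"
    by (intro always_eventually allI d)
  have "((\<lambda>h. (v (0 + h) - v 0) / h) \<longlongrightarrow> c) (at 0)" using du1 by (simp add: DERIV_def)
  then have "((\<lambda>h. v h / h) \<longlongrightarrow> c) (at 0)" using u10 by simp
  then have "((\<lambda>h. (v h / h) / 2) \<longlongrightarrow> c / 2) (at 0)" by (rule tendsto_divide) auto
  then show "((\<lambda>x. v x / (2 * x)) \<longlongrightarrow> c / 2) (at 0)" by (simp add: field_simps)
qed

lemma limit2:
  fixes \<phi> \<phi>1 :: "real \<Rightarrow> complex"
  assumes p0: "\<phi> 0 = 0" and dp: "\<And>e. (\<phi> has_vector_derivative \<phi>1 e) (at e)" and p10: "\<phi>1 0 = 0"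
    and dp1: "(\<phi>1 has_vector_derivative c) (at 0)"
  shows "((\<lambda>e. \<phi> e / complex_of_real (e^2)) \<longlongrightarrow> c / 2) (at 0)"
proof -
  have re: "((\<lambda>e. Re (\<phi> e) / e^2) \<longlongrightarrow> Re c / 2) (at 0)"
    by (rule limit2_real[where v = "\<lambda>e. Re (\<phi>1 e)"])
       (use p0 p10 dp dp1 in \<open>auto intro: has_field_derivative_Re\<close>)
  have im: "((\<lambda>e. Im (\<phi> e) / e^2) \<longlongrightarrow> Im c / 2) (at 0)"
    by (rule limit2_real[where v = "\<lambda>e. Im (\<phi>1 e)"])
       (use p0 p10 dp dp1 in \<open>auto intro: has_field_derivative_Im\<close>)
  show ?thesis unfolding tendsto_complex_iff using re im
    by (simp add: Re_divide_of_real Im_divide_of_real del: of_real_power)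
qed

definition Hs :: "complex poly poly \<Rightarrow> complex \<Rightarrow> complex \<Rightarrow> complex \<Rightarrow> complex" where
  "Hs f z v w = grad (fX f) z v * complex_of_real (Re w) + grad (fY f) z v * complex_of_real (Im w)"

lemma grad_scale: "grad f z (complex_of_real a * v) = complex_of_real a * grad f z v"
  by (simp add: grad_def algebra_simps)

lemma Hs_scale: "Hs f z (complex_of_real a * v) (complex_of_real a * v) = complex_of_real (a * a) * Hs f z v v"
  unfolding Hs_def grad_scale by (simp add: algebra_simps)

lemma second_deriv:
  assumes dP: "(P has_vector_derivative P1 t) (at t)" and dP1: "(P1 has_vector_derivative P2) (at t)"
  shows "((\<lambda>t. grad f (P t) (P1 t)) has_vector_derivative (Hs f (P t) (P1 t) (P1 t) + grad f (P t) P2)) (at t)"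
proof -
  have re: "((\<lambda>t. complex_of_real (Re (P1 t))) has_vector_derivative complex_of_real (Re P2)) (at t)"
    using dP1 by (intro has_vector_derivative_of_real) (simp add: has_vector_derivative_complex_iff)
  have im: "((\<lambda>t. complex_of_real (Im (P1 t))) has_vector_derivative complex_of_real (Im P2)) (at t)"
    using dP1 by (intro has_vector_derivative_of_real) (simp add: has_vector_derivative_complex_iff)
  have "((\<lambda>t. evalC (fX f) (P t) * complex_of_real (Re (P1 t)) + evalC (fY f) (P t) * complex_of_real (Im (P1 t)))
     has_vector_derivative
     (evalC (fX f) (P t) * complex_of_real (Re P2) + grad (fX f) (P t) (P1 t) * complex_of_real (Re (P1 t)) +
      (evalC (fY f) (P t) * complex_of_real (Im P2) + grad (fY f) (P t) (P1 t) * complex_of_real (Im (P1 t))))) (at t)"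
    by (intro has_vector_derivative_add has_vector_derivative_mult evalC_deriv dP re im)
  then show ?thesis by (simp add: grad_def[of f] Hs_def algebra_simps)
qed

lemma cis_deriv: "((\<lambda>e. cis (\<sigma> * e)) has_vector_derivative \<i> * complex_of_real \<sigma> * cis (\<sigma> * e)) (at e)"
  unfolding has_vector_derivative_complex_iff
  by (auto intro!: derivative_eq_intros simp: cis.sel)

lemma vd_eq: "(f has_vector_derivative D) F \<Longrightarrow> D = E \<Longrightarrow> (f has_vector_derivative E) F"
  by simp

lemma fY_grad:
  assumes "norm T = 1"
  shows "evalC (fY f) z = complex_of_real (Re T) * grad f z (\<i> * T) + complex_of_real (Im T) * grad f z T"
proof -
  have "(Re T)^2 + (Im T)^2 = 1" using assms by (simp add: cmod_power2[symmetric])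
  then have e: "complex_of_real (Re T) * complex_of_real (Re T) + complex_of_real (Im T) * complex_of_real (Im T) = 1"
    by (metis of_real_1 of_real_add of_real_mult power2_eq_square)
  have "complex_of_real (Re T) * grad f z (\<i> * T) + complex_of_real (Im T) * grad f z T
     = evalC (fY f) z * (complex_of_real (Re T) * complex_of_real (Re T) + complex_of_real (Im T) * complex_of_real (Im T))"
    by (simp add: grad_def algebra_simps)
  then show ?thesis using e by simp
qed

context ucurve begin

lemma order2:
  assumes van: "\<And>t. evalC f (parallel_curve g d t) = 0"
    and dk: "1 - d * k s \<noteq> 0" and d0: "d \<noteq> 0" and sg: "\<sigma> * \<sigma> = 1"
    and fy: "evalC (fY f) (parallel_curve g d s) \<noteq> 0"
  shows "\<exists>a. a \<noteq> 0 \<and> ((\<lambda>e. evalC f (g s + complex_of_real d * cis (\<sigma> * e) * \<i> * d1 s) / complex_of_real (e^2)) \<longlongrightarrow> a) (at 0)"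
proof -
  define p0 where "p0 = parallel_curve g d s"
  define T where "T = d1 s"
  define A where "A t = grad f (parallel_curve g d t) (d1 t + complex_of_real d * \<i> * d2 t)" for t
  have fun0: "(\<lambda>t. evalC f (parallel_curve g d t)) = (\<lambda>t. 0)" using van by simp
  have A0: "A t = 0" for t
  proof -
    have "((\<lambda>t. evalC f (parallel_curve g d t)) has_vector_derivative A t) (at t)"
      unfolding A_def by (rule evalC_deriv[OF PC1])
    moreover have "((\<lambda>t. evalC f (parallel_curve g d t)) has_vector_derivative 0) (at t)"
      unfolding fun0 by simp
    ultimately show ?thesis using vector_derivative_unique_at by blast
  qed
  have "(A has_vector_derivative (Hs f p0 (d1 s + complex_of_real d * \<i> * d2 s) (d1 s + complex_of_real d * \<i> * d2 s)
      + grad f p0 (d2 s + complex_of_real d * \<i> * d3 s))) (at s)"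
    unfolding A_def p0_def by (rule second_deriv[OF PC1 PC2])
  moreover have "A = (\<lambda>t. 0)" using A0 by auto
  ultimately have "((\<lambda>t. 0) has_vector_derivative (Hs f p0 (d1 s + complex_of_real d * \<i> * d2 s) (d1 s + complex_of_real d * \<i> * d2 s)
      + grad f p0 (d2 s + complex_of_real d * \<i> * d3 s))) (at s)" by simp
  then have H0: "Hs f p0 (d1 s + complex_of_real d * \<i> * d2 s) (d1 s + complex_of_real d * \<i> * d2 s)
      + grad f p0 (d2 s + complex_of_real d * \<i> * d3 s) = 0"
    using vector_derivative_unique_at has_vector_derivative_const by metis
  define G where "G = grad f p0 (\<i> * T)"
  define HT where "HT = Hs f p0 T T"
  define \<beta> where "\<beta> = Im (cnj (d1 s) * d3 s)"
  have "grad f p0 (complex_of_real (1 - d * k s) * T) = 0"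
    using A0[of s] unfolding A_def p0_def T_def PC1'[of s d] .
  then have "complex_of_real (1 - d * k s) * grad f p0 T = 0" by (simp only: grad_scale)
  then have gT: "grad f p0 T = 0" using dk by (simp del: of_real_diff of_real_mult)
  have "Hs f p0 (complex_of_real (1 - d * k s) * T) (complex_of_real (1 - d * k s) * T)
      + grad f p0 (complex_of_real (k s * (1 - d * k s)) * (\<i> * T) + complex_of_real (- d * \<beta>) * T) = 0"
    using H0 unfolding PC1' PC2' T_def \<beta>_def .
  then have eqH: "complex_of_real ((1 - d * k s) * (1 - d * k s)) * HT + complex_of_real (k s * (1 - d * k s)) * G = 0"
    unfolding Hs_scale grad_linear gT HT_def G_def by simp
  have eqH': "complex_of_real (1 - d * k s) * HT = - complex_of_real (k s) * G"
  proof -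
    have "complex_of_real (1 - d * k s) * (complex_of_real (1 - d * k s) * HT + complex_of_real (k s) * G) = 0"
      using eqH by (simp add: algebra_simps)
    moreover have "complex_of_real d * complex_of_real (k s) \<noteq> 1"
    proof
      assume "complex_of_real d * complex_of_real (k s) = 1"
      then have "complex_of_real (d * k s) = 1" by simp
      then have "d * k s = 1" using of_real_eq_1_iff by blast
      with dk show False by simp
    qed
    ultimately have "complex_of_real (1 - d * k s) * HT + complex_of_real (k s) * G = 0" by simp
    then show ?thesis by (simp add: algebra_simps eq_neg_iff_add_eq_0)
  qed
  have GT: "G \<noteq> 0"
  proof
    assume "G = 0"
    then have "evalC (fY f) p0 = 0" using fY_grad[OF unit[of s], of f p0] gT unfolding G_def T_def by simp
    then show False using fy p0_def by simp
  qed
  define C where "C e = g s + complex_of_real d * cis (\<sigma> * e) * \<i> * T" for e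
  define C1 where "C1 e = complex_of_real d * (\<i> * complex_of_real \<sigma> * cis (\<sigma> * e)) * \<i> * T" for e
  define C2 where "C2 e = complex_of_real d * (\<i> * complex_of_real \<sigma> * (\<i> * complex_of_real \<sigma> * cis (\<sigma> * e))) * \<i> * T" for e
  have dC: "(C has_vector_derivative C1 e) (at e)" for e
    unfolding C_def C1_def
    apply (rule vd_eq)
    apply (rule has_vector_derivative_add)
    apply (rule has_vector_derivative_const)
    apply (rule has_vector_derivative_mult_left)
    apply (rule has_vector_derivative_mult_left)
    apply (rule has_vector_derivative_mult_right)
    apply (rule cis_deriv)
    apply simp
    done
  have dC1: "(C1 has_vector_derivative C2 e) (at e)" for e
    unfolding C1_def C2_def
    apply (rule has_vector_derivative_mult_left)
    apply (rule has_vector_derivative_mult_left)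
    apply (rule has_vector_derivative_mult_right)
    apply (rule has_vector_derivative_mult_right)
    apply (rule cis_deriv)
    done
  define \<phi> where "\<phi> e = evalC f (C e)" for e
  define \<phi>1 where "\<phi>1 e = grad f (C e) (C1 e)" for e
  have C0: "C 0 = p0" unfolding C_def p0_def parallel_curve_def T_def by simp
  have C10: "C1 0 = complex_of_real (- d * \<sigma>) * T" unfolding C1_def by (simp add: algebra_simps)
  have ss: "complex_of_real \<sigma> * complex_of_real \<sigma> = 1" using sg by (metis of_real_1 of_real_mult)
  have ii: "\<i> * \<i> = -1" by simp
  have C20: "C2 0 = complex_of_real (- d) * (\<i> * T)" unfolding C2_def
    by (simp only: mult_zero_right cis_zero mult_1_right of_real_minus) (use ss ii in algebra)
  have dphi: "(\<phi> has_vector_derivative \<phi>1 e) (at e)" for e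
    unfolding \<phi>_def \<phi>1_def by (rule evalC_deriv[OF dC])
  have dphi1: "(\<phi>1 has_vector_derivative (Hs f p0 (C1 0) (C1 0) + grad f p0 (C2 0))) (at 0)"
    unfolding \<phi>1_def C0[symmetric] by (rule second_deriv[OF dC dC1])
  have phi0: "\<phi> 0 = 0" unfolding \<phi>_def C0 p0_def by (rule van)
  have phi10: "\<phi>1 0 = 0" unfolding \<phi>1_def C0 C10 grad_scale gT by simp
  define c where "c = Hs f p0 (C1 0) (C1 0) + grad f p0 (C2 0)"
  have c_eq: "c = complex_of_real (d * \<sigma> * (d * \<sigma>)) * HT - complex_of_real d * G"
    unfolding c_def C10 C20 Hs_scale grad_scale HT_def G_def by simp
  have "c * complex_of_real (1 - d * k s) = - complex_of_real d * G"
  proof -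
    have "c * complex_of_real (1 - d * k s) = complex_of_real (d * d) * (complex_of_real (1 - d * k s) * HT)
       - complex_of_real d * complex_of_real (1 - d * k s) * G"
      unfolding c_eq using ss by simp algebra
    also have "\<dots> = - complex_of_real d * G" unfolding eqH' by (simp add: algebra_simps)
    finally show ?thesis .
  qed
  then have cnz: "c \<noteq> 0" using GT d0 by auto
  have lim: "((\<lambda>e. \<phi> e / complex_of_real (e^2)) \<longlongrightarrow> c / 2) (at 0)"
    unfolding c_def by (rule limit2[OF phi0 dphi phi10 dphi1])
  show ?thesis
    by (rule exI[of _ "c/2"]) (use cnz lim in \<open>simp add: \<phi>_def C_def T_def\<close>)
qed

end

lemma not_dvd_pderiv:
  fixes f :: "complex poly poly"
  assumes "degree f > 0"
  shows "\<not> f dvd pderiv f"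
proof
  assume h: "f dvd pderiv f"
  have nz: "pderiv f \<noteq> 0" using assms by (simp add: pderiv_eq_0_iff)
  have "degree f \<le> degree (pderiv f)" by (rule dvd_imp_degree_le[OF h nz])
  moreover have "degree (pderiv f) = degree f - 1" by (rule degree_pderiv)
  ultimately show False using assms by simp
qed

definition nonconst :: "(real \<Rightarrow> complex) \<Rightarrow> bool" where
  "nonconst h \<longleftrightarrow> (\<forall>a b. a < b \<longrightarrow> \<not> h constant_on {a<..<b})"

lemma avoid_step:
  fixes h :: "real \<Rightarrow> complex"
  assumes ab: "a < b" and fB: "finite B" and ch: "continuous_on UNIV h" and nc: "nonconst h"
  shows "\<exists>a' b'. a \<le> a' \<and> a' < b' \<and> b' \<le> b \<and> (\<forall>t\<in>{a'<..<b'}. h t \<notin> B)"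
proof -
  have "\<exists>t0\<in>{a<..<b}. h t0 \<notin> B"
  proof (rule ccontr)
    assume "\<not> ?thesis"
    then have "h ` {a<..<b} \<subseteq> B" by auto
    then have "finite (h ` {a<..<b})" using fB finite_subset by blast
    then have "h constant_on {a<..<b}"
      by (intro continuous_finite_range_constant) (auto intro: continuous_on_subset[OF ch])
    then show False using nc ab unfolding nonconst_def by blast
  qed
  then obtain t0 where t0: "t0 \<in> {a<..<b}" "h t0 \<notin> B" by blast
  have "open (h -` (- B))"
    using ch fB by (intro open_vimage) (auto simp: finite_imp_closed open_Compl)
  then obtain e where e: "e > 0" "ball t0 e \<subseteq> h -` (- B)" using t0(2)
    by (meson ComplI open_contains_ball vimageI2)
  show ?thesis
  proof (intro exI conjI)
    show "a \<le> max a (t0 - e)" by simp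
    show "max a (t0 - e) < min b (t0 + e)" using t0 e by auto
    show "min b (t0 + e) \<le> b" by simp
    show "\<forall>t\<in>{max a (t0 - e)<..<min b (t0 + e)}. h t \<notin> B"
    proof
      fix t assume "t \<in> {max a (t0 - e)<..<min b (t0 + e)}"
      then have "t \<in> ball t0 e" by (auto simp: dist_real_def)
      then show "h t \<notin> B" using e by auto
    qed
  qed
qed

lemma avoid2:
  fixes h1 h2 :: "real \<Rightarrow> complex"
  assumes "finite B1" "finite B2" "continuous_on UNIV h1" "continuous_on UNIV h2" "nonconst h1" "nonconst h2"
  shows "\<exists>s. h1 s \<notin> B1 \<and> h2 s \<notin> B2"
proof -
  obtain a1 b1 where 1: "a1 < b1" "\<forall>t\<in>{a1<..<b1}. h1 t \<notin> B1"
    using avoid_step[of 0 1 B1 h1] assms by auto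
  obtain a2 b2 where 2: "a1 \<le> a2" "a2 < b2" "b2 \<le> b1" "\<forall>t\<in>{a2<..<b2}. h2 t \<notin> B2"
    using avoid_step[OF 1(1) assms(2,4,6)] by auto
  have "(a2 + b2) / 2 \<in> {a2<..<b2}" using 2 by auto
  moreover then have "(a2 + b2) / 2 \<in> {a1<..<b1}" using 2 by auto
  ultimately show ?thesis using 1 2 by blast
qed

context ucurve begin

lemma pc_nonconst:
  assumes dk: "\<And>t. 1 - d * k t \<noteq> 0"
  shows "nonconst (parallel_curve g d)"
  unfolding nonconst_def
proof (intro allI impI notI)
  fix a b :: real assume ab: "a < b" and c: "parallel_curve g d constant_on {a<..<b}"
  then obtain y where y: "\<And>t. t \<in> {a<..<b} \<Longrightarrow> parallel_curve g d t = y" unfolding constant_on_def by blast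
  define m where "m = (a + b) / 2"
  have m: "m \<in> {a<..<b}" using ab unfolding m_def by auto
  have "((\<lambda>t. y) has_vector_derivative (d1 m + complex_of_real d * \<i> * d2 m)) (at m)"
    by (rule has_vector_derivative_transform_within_open[OF PC1 open_greaterThanLessThan m]) (use y in auto)
  then have "d1 m + complex_of_real d * \<i> * d2 m = 0"
    using vector_derivative_unique_at has_vector_derivative_const by metis
  then have "complex_of_real (1 - d * k m) * d1 m = 0" by (simp only: PC1')
  then have "d1 m = 0" using dk[of m] by (simp del: of_real_diff of_real_mult)
  then show False using unit[of m] by simp
qed

lemma pc_cont: "continuous_on UNIV (parallel_curve g d)"
  by (rule continuous_on_vector_derivative) (auto intro: has_vector_derivative_at_within PC1)

lemma degree_pos:
  assumes fnz: "f \<noteq> 0" and van: "\<And>t. evalC f (parallel_curve g d t) = 0"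
    and dk: "\<And>t. 1 - d * k t \<noteq> 0" and k0: "\<And>t. k t \<noteq> 0"
  shows "degree f > 0"
proof (rule ccontr)
  assume "\<not> degree f > 0"
  then have "degree f = 0" by simp
  then obtain c where fc: "f = [:c:]" by (rule degree_eq_zeroE)
  then have c0: "c \<noteq> 0" using fnz by simp
  define h where "h t = Re (parallel_curve g d t)" for t
  have hroot: "poly c (complex_of_real (h t)) = 0" for t
    using van[of t] unfolding fc h_def by (simp add: evalC_def)
  have "finite {x::complex. poly c x = 0}" using c0 by (rule poly_roots_finite)
  then have "finite (complex_of_real -` {x::complex. poly c x = 0})"
    by (rule finite_vimageI) (simp add: inj_def)
  moreover have "h ` UNIV \<subseteq> complex_of_real -` {x::complex. poly c x = 0}" using hroot by auto
  ultimately have fin: "finite (h ` UNIV)" using finite_subset by blast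
  have dh: "(h has_real_derivative Re (complex_of_real (1 - d * k t) * d1 t)) (at t)" for t
    unfolding h_def PC1'[symmetric] by (rule has_field_derivative_Re[OF PC1])
  have "continuous_on UNIV h"
    by (rule continuous_on_vector_derivative) (use dh in \<open>auto intro: has_vector_derivative_at_within simp: has_real_derivative_iff_has_vector_derivative\<close>)
  then have "h constant_on UNIV" using fin by (intro continuous_finite_range_constant) auto
  then obtain y where y: "\<And>t. h t = y" unfolding constant_on_def by blast
  have reR: "Re (complex_of_real (1 - d * k t) * d1 t) = 0" for t
  proof -
    have "((\<lambda>t. y) has_real_derivative Re (complex_of_real (1 - d * k t) * d1 t)) (at t)"
      using dh[of t] y by (metis (no_types) ext)
    then show ?thesis using DERIV_unique DERIV_const by blast
  qed
  have re0: "Re (d1 t) = 0" for t using reR[of t] dk[of t] by simp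
  have "(\<lambda>t. Re (d1 t)) = (\<lambda>t. 0)" using re0 by auto
  moreover have "((\<lambda>t. Re (d1 t)) has_real_derivative Re (d2 t)) (at t)" for t
    by (rule has_field_derivative_Re[OF D1])
  ultimately have "((\<lambda>t. 0) has_real_derivative Re (d2 t)) (at t)" for t by metis
  then have re2: "Re (d2 t) = 0" for t using DERIV_unique DERIV_const by blast
  have kim: "k t * Im (d1 t) = 0" for t using re2[of t] K1[of t] by simp
  have "Im (d1 t) = 0" for t using kim[of t] k0[of t] by simp
  then have "d1 0 = 0" using re0[of 0] by (simp add: complex_eq_iff)
  then show False using unit[of 0] by simp
qed

end

lemma order_compare_lt:
  fixes A B U V :: "real \<Rightarrow> complex"
  assumes mn: "m < n"
    and lA: "((\<lambda>e. A e / complex_of_real (e^2)) \<longlongrightarrow> a) (at 0)" and a0: "a \<noteq> 0"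
    and lB: "((\<lambda>e. B e / complex_of_real (e^2)) \<longlongrightarrow> b) (at 0)"
    and lU: "(U \<longlongrightarrow> u) (at 0)" and u0: "u \<noteq> 0"
    and lV: "(V \<longlongrightarrow> v) (at 0)"
    and ev: "eventually (\<lambda>e. A e ^ m * U e = B e ^ n * V e) (at 0)"
  shows False
proof -
  define A' where "A' e = A e / complex_of_real (e^2)" for e
  define B' where "B' e = B e / complex_of_real (e^2)" for e
  have ev2: "eventually (\<lambda>e. A' e ^ m * U e = complex_of_real (e^2) ^ (n - m) * (B' e ^ n * V e)) (at 0)"
  proof -
    have nz: "eventually (\<lambda>e::real. e \<noteq> 0) (at 0)" by (simp add: eventually_at_filter)
    show ?thesis using ev nz
  proof eventually_elim
    case (elim e)
    show ?case
    proof -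
      have ne: "complex_of_real (e^2) \<noteq> 0" using elim(2) by simp
      have Ae: "A e = complex_of_real (e^2) * A' e" and Be: "B e = complex_of_real (e^2) * B' e"
        using ne by (simp_all add: A'_def B'_def)
      have "complex_of_real (e^2) ^ m * (A' e ^ m * U e) = complex_of_real (e^2) ^ m * (complex_of_real (e^2) ^ (n - m) * (B' e ^ n * V e))"
        using elim unfolding Ae Be power_mult_distrib mult.assoc[symmetric] power_add[symmetric]
        using mn by (simp add: mult.assoc)
      then show ?thesis using ne by simp
    qed
  qed
  qed
  have l1: "((\<lambda>e. A' e ^ m * U e) \<longlongrightarrow> a ^ m * u) (at 0)"
    unfolding A'_def by (intro tendsto_intros lA lU)
  have "((\<lambda>e::real. complex_of_real (e^2)) \<longlongrightarrow> complex_of_real (0^2)) (at 0)"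
    by (intro tendsto_intros)
  then have l2: "((\<lambda>e. complex_of_real (e^2) ^ (n - m) * (B' e ^ n * V e)) \<longlongrightarrow> 0 ^ (n - m) * (b ^ n * v)) (at 0)"
    unfolding B'_def by (intro tendsto_intros lB lV) simp
  have l2': "((\<lambda>e. A' e ^ m * U e) \<longlongrightarrow> 0 ^ (n - m) * (b ^ n * v)) (at 0)"
  proof -
    have "\<forall>\<^sub>F e in at 0. complex_of_real (e^2) ^ (n - m) * (B' e ^ n * V e) = A' e ^ m * U e"
      using ev2 by (rule eventually_mono) simp
    then show ?thesis by (rule Lim_transform_eventually[OF l2])
  qed
  have "a ^ m * u = 0 ^ (n - m) * (b ^ n * v)"
    using tendsto_unique[OF at_neq_bot l1 l2'] .
  moreover have "(0::complex) ^ (n - m) = 0" using mn by simp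
  ultimately show False using a0 u0 by simp
qed

lemma circ_deriv:
  "((\<lambda>e. c + complex_of_real d * cis (\<sigma> * e) * \<i> * T) has_vector_derivative
       complex_of_real d * (\<i> * complex_of_real \<sigma> * cis (\<sigma> * e)) * \<i> * T) (at e)"
  apply (rule vd_eq)
  apply (rule has_vector_derivative_add)
  apply (rule has_vector_derivative_const)
  apply (rule has_vector_derivative_mult_left)
  apply (rule has_vector_derivative_mult_left)
  apply (rule has_vector_derivative_mult_right)
  apply (rule cis_deriv)
  apply simp
  done

lemma circ_tendsto:
  "((\<lambda>e. evalC f (c + complex_of_real d * cis (\<sigma> * e) * \<i> * T)) \<longlongrightarrow> evalC f (c + complex_of_real d * \<i> * T)) (at 0)"
proof -
  have "continuous (at 0) (\<lambda>e. evalC f (c + complex_of_real d * cis (\<sigma> * e) * \<i> * T))"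
    by (rule has_vector_derivative_continuous[OF evalC_deriv[OF circ_deriv]])
  then show ?thesis by (simp add: continuous_at)
qed

theorem proposition5p6:
  fixes \<Omega> :: "complex set" and \<gamma> :: "real \<Rightarrow> complex" and L \<beta> r :: real
    and F :: "real poly poly" and fp fm g1 :: "complex poly poly" and m n :: nat
  assumes dom: "open \<Omega>" "convex \<Omega>" "bounded \<Omega>" "\<Omega> \<noteq> {}"
    and L: "L > 0"
    and periodic: "\<forall>s. \<gamma> (s + L) = \<gamma> s"
    and simple: "inj_on \<gamma> {0..<L}"
    and smooth: "smooth_curve \<gamma>"
    and arclength: "\<forall>s. norm (vderiv \<gamma> s) = 1"
    and boundary: "frontier \<Omega> = \<gamma> ` {0..L}"
    and ccw: "\<forall>w\<in>\<Omega>. winding_number (\<lambda>t. \<gamma> (L * t)) w = 1"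
    and beta: "0 < \<beta>" "\<forall>s. \<beta> < curvature \<gamma> s"
    and r: "r = 1 / \<beta>"
    and F_nz: "F \<noteq> 0"
    and F_van: "\<forall>s. evalR F (parallel_curve \<gamma> r s) = 0 \<and> evalR F (parallel_curve \<gamma> (- r) s) = 0"
    and F_sym: "\<forall>s. \<exists>\<delta>>0. \<forall>\<epsilon>. \<bar>\<epsilon>\<bar> < \<delta> \<longrightarrow>
       evalR F (\<gamma> s + r * cis (- \<epsilon>) * \<i> * vderiv \<gamma> s)
         = evalR F (\<gamma> s - r * cis \<epsilon> * \<i> * vderiv \<gamma> s)"
    and fp: "irreducible fp" "\<forall>s. evalC fp (parallel_curve \<gamma> r s) = 0"
    and fm: "irreducible fm" "\<forall>s. evalC fm (parallel_curve \<gamma> (- r) s) = 0"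
    and distinct: "\<not> fp dvd fm"
    and fact: "complexify F = fp ^ m * fm ^ n * g1"
    and g1: "finite {z \<in> range (parallel_curve \<gamma> r) \<union> range (parallel_curve \<gamma> (- r)). evalC g1 z = 0}"
  shows "m = n"
proof -
  interpret ucurve \<gamma> using smooth arclength by unfold_locales auto
  have r_pos: "r > 0" using r beta(1) by simp
  have rb: "r * \<beta> = 1" using r beta(1) by simp
  have rk: "r * curvature \<gamma> t > 1" for t
  proof -
    have "r * \<beta> < r * curvature \<gamma> t" using beta(2) r_pos by simp
    then show ?thesis using rb by simp
  qed
  have kpos: "curvature \<gamma> t > 0" for t using beta by (meson less_trans)
  have dk1: "1 - r * curvature \<gamma> t \<noteq> 0" for t using rk[of t] by simp
  have dk2: "1 - (- r) * curvature \<gamma> t \<noteq> 0" for t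
  proof -
    have "r * curvature \<gamma> t > 0" using mult_pos_pos[OF r_pos kpos[of t]] .
    moreover have "1 - (- r) * curvature \<gamma> t = 1 + r * curvature \<gamma> t" by simp
    ultimately show ?thesis by linarith
  qed
  have k0: "curvature \<gamma> t \<noteq> 0" for t using kpos[of t] by simp
  have fp0: "fp \<noteq> 0" and fm0: "fm \<noteq> 0" using fp(1) fm(1) by (auto simp: irreducible_def)
  have degp: "degree fp > 0" by (rule degree_pos[OF fp0 _ dk1 k0]) (use fp(2) in auto)
  have degm: "degree fm > 0" by (rule degree_pos[OF fm0 _ dk2 k0]) (use fm(2) in auto)
  define Z1 where "Z1 = {z. evalC fp z = 0 \<and> evalC fm z = 0}"
  define Z3 where "Z3 = {z. evalC fp z = 0 \<and> evalC (pderiv fp) z = 0}"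
  define Z4 where "Z4 = {z. evalC fm z = 0 \<and> evalC (pderiv fm) z = 0}"
  define Z5 where "Z5 = {z \<in> range (parallel_curve \<gamma> r) \<union> range (parallel_curve \<gamma> (- r)). evalC g1 z = 0}"
  have fZ1: "finite Z1" unfolding Z1_def by (rule bezout_finite[OF fp(1) degp distinct])
  have fZ3: "finite Z3" unfolding Z3_def by (rule bezout_finite[OF fp(1) degp not_dvd_pderiv[OF degp]])
  have fZ4: "finite Z4" unfolding Z4_def by (rule bezout_finite[OF fm(1) degm not_dvd_pderiv[OF degm]])
  have fZ5: "finite Z5" unfolding Z5_def by (rule g1)
  obtain s where s1: "parallel_curve \<gamma> r s \<notin> Z1 \<union> Z3 \<union> Z5" and s2: "parallel_curve \<gamma> (- r) s \<notin> Z1 \<union> Z4 \<union> Z5"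
    using avoid2[of "Z1 \<union> Z3 \<union> Z5" "Z1 \<union> Z4 \<union> Z5" "parallel_curve \<gamma> r" "parallel_curve \<gamma> (- r)"]
      fZ1 fZ3 fZ4 fZ5 pc_cont pc_nonconst[OF dk1] pc_nonconst[OF dk2] by blast
  define pp where "pp = parallel_curve \<gamma> r s"
  define pm where "pm = parallel_curve \<gamma> (- r) s"
  have pp0: "evalC fp pp = 0" using fp(2) pp_def by simp
  have pm0: "evalC fm pm = 0" using fm(2) pm_def by simp
  have pp1: "evalC fm pp \<noteq> 0" using s1 pp0 unfolding Z1_def pp_def by auto
  have pp2: "evalC (fY fp) pp \<noteq> 0" using s1 pp0 unfolding Z3_def pp_def fY_def by auto
  have pp3: "evalC g1 pp \<noteq> 0" using s1 unfolding Z5_def pp_def by auto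
  have pm1: "evalC fp pm \<noteq> 0" using s2 pm0 unfolding Z1_def pm_def by auto
  have pm2: "evalC (fY fm) pm \<noteq> 0" using s2 pm0 unfolding Z4_def pm_def fY_def by auto
  have pm3: "evalC g1 pm \<noteq> 0" using s2 unfolding Z5_def pm_def by auto
  define Pp where "Pp e = \<gamma> s + complex_of_real r * cis (- 1 * e) * \<i> * vderiv \<gamma> s" for e
  define Pm where "Pm e = \<gamma> s + complex_of_real (- r) * cis (1 * e) * \<i> * vderiv \<gamma> s" for e
  obtain a where a0: "a \<noteq> 0" and la: "((\<lambda>e. evalC fp (Pp e) / complex_of_real (e^2)) \<longlongrightarrow> a) (at 0)"
    using order2[of fp r s "-1"] fp(2) dk1[of s] r_pos pp2 unfolding Pp_def pp_def by auto
  obtain b where b0: "b \<noteq> 0" and lb: "((\<lambda>e. evalC fm (Pm e) / complex_of_real (e^2)) \<longlongrightarrow> b) (at 0)"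
    using order2[of fm "-r" s 1] fm(2) dk2[of s] r_pos pm2 unfolding Pm_def pm_def by auto
  have tPp: "((\<lambda>e. evalC f (Pp e)) \<longlongrightarrow> evalC f pp) (at 0)" for f
    using circ_tendsto[of f "\<gamma> s" r "-1" "vderiv \<gamma> s"] unfolding Pp_def pp_def parallel_curve_def .
  have tPm: "((\<lambda>e. evalC f (Pm e)) \<longlongrightarrow> evalC f pm) (at 0)" for f
    using circ_tendsto[of f "\<gamma> s" "-r" 1 "vderiv \<gamma> s"] unfolding Pm_def pm_def parallel_curve_def .
  define U where "U e = evalC fm (Pp e) ^ n * evalC g1 (Pp e)" for e
  define V where "V e = evalC fp (Pm e) ^ m * evalC g1 (Pm e)" for e
  have lU: "(U \<longlongrightarrow> evalC fm pp ^ n * evalC g1 pp) (at 0)" unfolding U_def by (intro tendsto_intros tPp)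
  have lV: "(V \<longlongrightarrow> evalC fp pm ^ m * evalC g1 pm) (at 0)" unfolding V_def by (intro tendsto_intros tPm)
  have u0: "evalC fm pp ^ n * evalC g1 pp \<noteq> 0" using pp1 pp3 by simp
  have v0: "evalC fp pm ^ m * evalC g1 pm \<noteq> 0" using pm1 pm3 by simp
  obtain \<delta> where \<delta>: "\<delta> > 0" "\<And>e. \<bar>e\<bar> < \<delta> \<Longrightarrow> evalR F (\<gamma> s + r * cis (- e) * \<i> * vderiv \<gamma> s)
         = evalR F (\<gamma> s - r * cis e * \<i> * vderiv \<gamma> s)" using F_sym by blast
  have evd: "eventually (\<lambda>e::real. \<bar>e\<bar> < \<delta>) (at 0)"
    using \<delta>(1) by (auto simp: eventually_at dist_real_def intro!: exI[of _ \<delta>])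
  have ev: "eventually (\<lambda>e. evalC fp (Pp e) ^ m * U e = evalC fm (Pm e) ^ n * V e) (at 0)"
    using evd
  proof eventually_elim
    case (elim e)
    have "evalC (complexify F) (Pp e) = evalC (complexify F) (Pm e)"
      unfolding evalC_complexify Pp_def Pm_def using \<delta>(2)[OF elim] by (simp add: algebra_simps)
    then show ?case unfolding fact U_def V_def by (simp add: algebra_simps)
  qed
  show "m = n"
  proof (rule linorder_cases[of m n])
    assume "m < n"
    then show ?thesis using order_compare_lt[OF _ la a0 lb lU u0 lV ev] by blast
  next
    assume "n < m"
    have ev': "eventually (\<lambda>e. evalC fm (Pm e) ^ n * V e = evalC fp (Pp e) ^ m * U e) (at 0)"
      using ev by (rule eventually_mono) simp
    show ?thesis using order_compare_lt[OF \<open>n < m\<close> lb b0 la lV v0 lU ev'] by blast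
  qed
qed

end
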